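(* Let $\Gamma=(V,E,\ell)$ be a connected finite labeled simplicial graph with all labels even whose Artin group is of FC-type, $\mathbb{K}$ a field of characteristic $0$, $\chi:A_\Gamma\to\mathbb{Z}$ a surjective non-resonant homomorphism, and $d\in\mathbb{T}_\Gamma$. The multiplicity spectral sequence $(E^k_{d,(p,q)},\partial^k)$ is bounded and satisfies: (i) $E^0_{d,(p,q)}=\{0\}$ if $p+q<-1$; (ii) $E^0_{d,(p,-p-1)}=\langle\sigma_\emptyset\rangle_{\mathbb{K}}$ if $p=0$, and $=\{0\}$ otherwise; (iii) for $q\ge0$: $E^0_{d,(p,q-p)}=\langle\sigma_X: X\text{ a simplex of }\mathcal{F}^f(\Gamma)\text{ with }q+1\text{ vertices},\ w(X)=p\rangle_{\mathbb{K}}$ if $p\le q+1$, and $E^0_{d,(p,q-p)}=\{0\}$ otherwise.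
   Context: $\Gamma$ has labels $\ell(e)=2\tilde\ell(e)$, $\tilde\ell(e)\ge1$; $A_\Gamma=\langle g_v\ (v\in V)\mid (g_vg_w)^{\tilde\ell(e)}=(g_wg_v)^{\tilde\ell(e)},\ e=\{v,w\}\in E\rangle$; FC-type means that for every clique $X$ the Coxeter group on $g_v$ ($v\in X$) with $g_v^2=1$, $(g_vg_w)^{\ell(\{v,w\})}=1$ is finite. $\mathcal{F}^f(\Gamma)$ is the simplicial complex on $V$ whose simplices are those cliques (plus the empty simplex $\emptyset$); $C^f_*(\Gamma)$ is its augmented chain complex over $\mathbb{K}$: $C^f_q$ has basis $\sigma_X$, $X$ a simplex with $q+1$ vertices ($C^f_{-1}=\mathbb{K}\sigma_\emptyset$), with the simplicial boundary $\partial$ for a fixed order of $V$. $m_v=\chi(g_v)$, $m_e=m_v+m_w$; non-resonant means $m_v\ne0$ for all $v$. $q_n(x)=(x^n-1)/(x-1)$; $\mathbf{p}_X=\prod_{v\in X}(t^{m_v}-1)$, $\mathbf{q}_X=\prod_{e\subseteq X,e\in E}q_{\tilde\ell(e)}(t^{m_e})$ (empty products $=1$). $\operatorname{mult}_d(f)$ is the multiplicity of the $d$-th cyclotomic polynomial $\Phi_d$ in $f$. $\mathbb{T}_\Gamma=\{d>1: d\mid m_v\text{ some }v\}\cup\{d>1: d\mid\tilde\ell(e)m_e,\ d\nmid m_e\text{ some }e\}$. Weight: $w(X)=\operatorname{mult}_d(\mathbf{p}_X\mathbf{q}_X)$. Filtration: $F_{d,p}C_q=\langle\sigma_X: X\text{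 with }q+1\text{ vertices},\ w(X)\le p\rangle\subseteq C^f_q(\Gamma)$, $F_{d,p}C_q=0$ for $p<0$; this is an increasing filtration by subcomplexes. The multiplicity spectral sequence is the spectral sequence of this filtered complex, with $E^0_{d,(p,q)}=F_{d,p}C_{p+q}/F_{d,p-1}C_{p+q}$ and differentials $\partial^k$ of bidegree $(-k,k-1)$. *)

theory Defs
  imports "HOL-Analysis.Analysis" "HOL-Computational_Algebra.Polynomial_FPS"
          "HOL-Computational_Algebra.Formal_Laurent_Series"
begin

text \<open>Vertices V, edges E (2-element subsets of V), reduced labels lt e = ltilde(e) >= 1;
  the actual label is 2 * lt e (all labels even).\<close>

definition labeled_graph :: "'v set \<Rightarrow> 'v set set \<Rightarrow> ('v set \<Rightarrow> nat) \<Rightarrow> bool" where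
  "labeled_graph V E lt \<longleftrightarrow> finite V \<and>
     (\<forall>e\<in>E. \<exists>v w. v \<noteq> w \<and> v \<in> V \<and> w \<in> V \<and> e = {v, w}) \<and>
     (\<forall>e\<in>E. lt e \<ge> 1)"

definition graph_connected :: "'v set \<Rightarrow> 'v set set \<Rightarrow> bool" where
  "graph_connected V E \<longleftrightarrow>
     (\<forall>v\<in>V. \<forall>w\<in>V. (\<lambda>x y. {x, y} \<in> E)\<^sup>*\<^sup>* v w)"

definition clique :: "'v set \<Rightarrow> 'v set set \<Rightarrow> 'v set \<Rightarrow> bool" where
  "clique V E X \<longleftrightarrow> X \<subseteq> V \<and> (\<forall>v\<in>X. \<forall>w\<in>X. v \<noteq> w \<longrightarrow> {v, w} \<in> E)"

text \<open>Generators g_v (v in X) with g_v^2 = 1 and (g_v g_w)^(2 lt {v,w}) = 1.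
  Since generators are involutions, the group is the monoid of words over X modulo
  the congruence generated by these relators.\<close>

inductive cox_eq :: "'v set \<Rightarrow> ('v set \<Rightarrow> nat) \<Rightarrow> 'v list \<Rightarrow> 'v list \<Rightarrow> bool"
  for X lt where
  refl: "set u \<subseteq> X \<Longrightarrow> cox_eq X lt u u"
| sym: "cox_eq X lt u w \<Longrightarrow> cox_eq X lt w u"
| trans: "cox_eq X lt u w \<Longrightarrow> cox_eq X lt w z \<Longrightarrow> cox_eq X lt u z"
| sq: "set u \<subseteq> X \<Longrightarrow> set w \<subseteq> X \<Longrightarrow> v \<in> X \<Longrightarrow>
       cox_eq X lt (u @ [v, v] @ w) (u @ w)"
| braid: "set u \<subseteq> X \<Longrightarrow> set w \<subseteq> X \<Longrightarrow> v \<in> X \<Longrightarrow> x \<in> X \<Longrightarrow> v \<noteq> x \<Longrightarrow>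
       cox_eq X lt (u @ concat (replicate (2 * lt {v, x}) [v, x]) @ w) (u @ w)"

definition coxeter_finite :: "('v set \<Rightarrow> nat) \<Rightarrow> 'v set \<Rightarrow> bool" where
  "coxeter_finite lt X \<longleftrightarrow> finite {c. \<exists>u. set u \<subseteq> X \<and> c = {w. cox_eq X lt u w}}"

definition FC_type :: "'v set \<Rightarrow> 'v set set \<Rightarrow> ('v set \<Rightarrow> nat) \<Rightarrow> bool" where
  "FC_type V E lt \<longleftrightarrow> (\<forall>X. clique V E X \<longrightarrow> coxeter_finite lt X)"

text \<open>Simplices of F^f(Gamma): cliques with finite Coxeter group (including the empty one).\<close>
definition simplices :: "'v set \<Rightarrow> 'v set set \<Rightarrow> ('v set \<Rightarrow> nat) \<Rightarrow> 'v set set" where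
  "simplices V E lt = {X. clique V E X \<and> coxeter_finite lt X}"

text \<open>Words in g_v^{+1} (v,True) and g_v^{-1} (v,False); the Artin group is the set of
  words modulo the congruence generated by free cancellation and the Artin relations.\<close>

inductive artin_eq :: "'v set \<Rightarrow> 'v set set \<Rightarrow> ('v set \<Rightarrow> nat) \<Rightarrow>
    ('v \<times> bool) list \<Rightarrow> ('v \<times> bool) list \<Rightarrow> bool"
  for V E lt where
  refl: "set u \<subseteq> V \<times> UNIV \<Longrightarrow> artin_eq V E lt u u"
| sym: "artin_eq V E lt u w \<Longrightarrow> artin_eq V E lt w u"
| trans: "artin_eq V E lt u w \<Longrightarrow> artin_eq V E lt w z \<Longrightarrow> artin_eq V E lt u z"
| cancel: "set u \<subseteq> V \<times> UNIV \<Longrightarrow> set w \<subseteq> V \<times> UNIV \<Longrightarrow> v \<in> V \<Longrightarrow>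
       artin_eq V E lt (u @ [(v, b), (v, \<not> b)] @ w) (u @ w)"
| braid: "set u \<subseteq> V \<times> UNIV \<Longrightarrow> set w \<subseteq> V \<times> UNIV \<Longrightarrow> {v, x} \<in> E \<Longrightarrow>
       artin_eq V E lt (u @ concat (replicate (lt {v, x}) [(v, True), (x, True)]) @ w)
                       (u @ concat (replicate (lt {v, x}) [(x, True), (v, True)]) @ w)"

text \<open>A homomorphism A_Gamma -> Z, given on words: additive and constant on classes.\<close>
definition artin_hom :: "'v set \<Rightarrow> 'v set set \<Rightarrow> ('v set \<Rightarrow> nat) \<Rightarrow>
    (('v \<times> bool) list \<Rightarrow> int) \<Rightarrow> bool" where
  "artin_hom V E lt chi \<longleftrightarrow>
     (\<forall>u\<in>lists (V \<times> UNIV). \<forall>w\<in>lists (V \<times> UNIV). chi (u @ w) = chi u + chi w) \<and>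
     (\<forall>u w. artin_eq V E lt u w \<longrightarrow> chi u = chi w)"

definition hom_surjective :: "'v set \<Rightarrow> (('v \<times> bool) list \<Rightarrow> int) \<Rightarrow> bool" where
  "hom_surjective V chi \<longleftrightarrow> (\<forall>z. \<exists>w\<in>lists (V \<times> UNIV). chi w = z)"

definition mv :: "(('v \<times> bool) list \<Rightarrow> int) \<Rightarrow> 'v \<Rightarrow> int" where
  "mv chi v = chi [(v, True)]"

definition me :: "(('v \<times> bool) list \<Rightarrow> int) \<Rightarrow> 'v set \<Rightarrow> int" where
  "me chi e = (\<Sum>v\<in>e. mv chi v)"

definition non_resonant :: "'v set \<Rightarrow> (('v \<times> bool) list \<Rightarrow> int) \<Rightarrow> bool" where
  "non_resonant V chi \<longleftrightarrow> (\<forall>v\<in>V. mv chi v \<noteq> 0)"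

definition T_Gamma :: "'v set \<Rightarrow> 'v set set \<Rightarrow> ('v set \<Rightarrow> nat) \<Rightarrow>
    (('v \<times> bool) list \<Rightarrow> int) \<Rightarrow> nat set" where
  "T_Gamma V E lt chi =
     {d. d > 1 \<and> (\<exists>v\<in>V. int d dvd mv chi v)} \<union>
     {d. d > 1 \<and> (\<exists>e\<in>E. int d dvd int (lt e) * me chi e \<and> \<not> int d dvd me chi e)}"

text \<open>t^m for m an integer, in the Laurent series ring (Laurent polynomials are those
  with finitely many nonzero coefficients).\<close>
definition tpow :: "int \<Rightarrow> complex fls" where
  "tpow m = (if m \<ge> 0 then fls_X ^ nat m else fls_X_inv ^ nat (- m))"

definition laurent_poly :: "complex fls \<Rightarrow> bool" where
  "laurent_poly g \<longleftrightarrow> finite {n. fls_nth g n \<noteq> 0}"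

text \<open>q_n(x) = (x^n - 1)/(x - 1) = 1 + x + ... + x^(n-1).\<close>
definition qpoly :: "nat \<Rightarrow> 'a::comm_semiring_1 \<Rightarrow> 'a" where
  "qpoly n x = (\<Sum>j<n. x ^ j)"

definition cyclotomic :: "nat \<Rightarrow> complex poly" where
  "cyclotomic d = (\<Prod>k\<in>{k. k < d \<and> coprime k d}.
       [:- cis (2 * pi * real k / real d), 1:])"

definition mult :: "nat \<Rightarrow> complex fls \<Rightarrow> nat" where
  "mult d f = (GREATEST k. \<exists>g. laurent_poly g \<and>
                   f = (fps_to_fls (fps_of_poly (cyclotomic d))) ^ k * g)"

definition pX :: "(('v \<times> bool) list \<Rightarrow> int) \<Rightarrow> 'v set \<Rightarrow> complex fls" where
  "pX chi X = (\<Prod>v\<in>X. tpow (mv chi v) - 1)"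

definition qX :: "'v set set \<Rightarrow> ('v set \<Rightarrow> nat) \<Rightarrow> (('v \<times> bool) list \<Rightarrow> int) \<Rightarrow>
    'v set \<Rightarrow> complex fls" where
  "qX E lt chi X = (\<Prod>e\<in>{e\<in>E. e \<subseteq> X}. qpoly (lt e) (tpow (me chi e)))"

definition weight :: "'v set set \<Rightarrow> ('v set \<Rightarrow> nat) \<Rightarrow> (('v \<times> bool) list \<Rightarrow> int) \<Rightarrow>
    nat \<Rightarrow> 'v set \<Rightarrow> nat" where
  "weight E lt chi d X = mult d (pX chi X * qX E lt chi X)"

text \<open>Chains are functions from simplices to K; sigma X is the basis chain of X.\<close>
definition sigma :: "'v set \<Rightarrow> 'v set \<Rightarrow> 'k::field" where
  "sigma X = (\<lambda>Y. if Y = X then 1 else 0)"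

definition kspan :: "('v set \<Rightarrow> 'k::field) set \<Rightarrow> ('v set \<Rightarrow> 'k) set" where
  "kspan B = {f. \<exists>A a. finite A \<and> A \<subseteq> B \<and> f = (\<lambda>Y. \<Sum>b\<in>A. a b * b Y)}"

definition Filt :: "'k::field itself \<Rightarrow> 'v set \<Rightarrow> 'v set set \<Rightarrow> ('v set \<Rightarrow> nat) \<Rightarrow>
    (('v \<times> bool) list \<Rightarrow> int) \<Rightarrow> nat \<Rightarrow> int \<Rightarrow> int \<Rightarrow> ('v set \<Rightarrow> 'k) set" where
  "Filt K V E lt chi d p n =
     (if p < 0 then {\<lambda>Y. 0} else
      kspan {sigma X | X. X \<in> simplices V E lt \<and> int (card X) = n + 1 \<and>
                          int (weight E lt chi d X) \<le> p})"

text \<open>The classes of the vectors in B form a basis of the quotient U / W.\<close>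
definition quotient_basis :: "('v set \<Rightarrow> 'k::field) set \<Rightarrow> ('v set \<Rightarrow> 'k) set \<Rightarrow>
    ('v set \<Rightarrow> 'k) set \<Rightarrow> bool" where
  "quotient_basis U W B \<longleftrightarrow> B \<subseteq> U \<and> W \<subseteq> U \<and>
     (\<forall>u\<in>U. \<exists>A a. finite A \<and> A \<subseteq> B \<and> (\<lambda>Y. u Y - (\<Sum>b\<in>A. a b * b Y)) \<in> W) \<and>
     (\<forall>A a. finite A \<and> A \<subseteq> B \<and> (\<lambda>Y. \<Sum>b\<in>A. a b * b Y) \<in> W \<longrightarrow> (\<forall>b\<in>A. a b = 0))"

text \<open>E^0_{d,(p,q)} = F_{d,p} C_{p+q} / F_{d,p-1} C_{p+q} has basis the classes of B.
  In particular "E^0 = {0}" is E0_basis ... {}.\<close>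
definition E0_basis :: "'k::field itself \<Rightarrow> 'v set \<Rightarrow> 'v set set \<Rightarrow> ('v set \<Rightarrow> nat) \<Rightarrow>
    (('v \<times> bool) list \<Rightarrow> int) \<Rightarrow> nat \<Rightarrow> int \<Rightarrow> int \<Rightarrow> ('v set \<Rightarrow> 'k) set \<Rightarrow> bool" where
  "E0_basis K V E lt chi d p q B \<longleftrightarrow>
     quotient_basis (Filt K V E lt chi d p (p + q)) (Filt K V E lt chi d (p - 1) (p + q)) B"

end

theory Submission
  imports Defs
begin

unbundle fps_syntax

definition R :: "complex poly \<Rightarrow> int \<Rightarrow> complex fls" where
  "R P s = fls_shift (-s) (fps_to_fls (fps_of_poly P))"

lemma R_nth: "R P s $$ k = (if s \<le> k then coeff P (nat (k - s)) else 0)"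
  by (simp add: R_def)

lemma R_mult: "R P s * R Q t = R (P * Q) (s + t)"
  by (simp add: R_def fls_times_both_shifted_simp fps_of_poly_mult fls_times_fps_to_fls add.commute)

lemma R_one: "R 1 0 = 1"
  by (simp add: R_def)

lemma R_zero_iff: "R P s = 0 \<longleftrightarrow> P = 0"
  by (simp add: R_def fls_shift_eq0_iff fps_of_poly_eq_iff[of P 0, simplified])

lemma R_0 [simp]: "R 0 s = 0"
  by (simp add: R_def)

lemma tpow_nth: "tpow m $$ k = (if k = m then 1 else 0)"
  by (auto simp: tpow_def fls_X_power_conv_shift_1 fls_X_inv_power_conv_shift_1)

lemma tpow_R: "tpow m = R 1 m"
  by (simp add: fls_eq_iff tpow_nth R_nth)

lemma laurent_R: "laurent_poly (R P s)"
proof -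
  have "{n. R P s $$ n \<noteq> 0} \<subseteq> {s .. s + int (degree P)}"
    by (auto simp: R_nth split: if_splits dest!: le_degree)
  then show ?thesis unfolding laurent_poly_def by (rule finite_subset) simp
qed

lemma R_same_inj: "R P s = R Q s \<Longrightarrow> P = Q"
proof (rule poly_eqI)
  fix n assume "R P s = R Q s"
  then have "R P s $$ (s + int n) = R Q s $$ (s + int n)" by simp
  then show "coeff P n = coeff Q n" by (simp add: R_nth)
qed

lemma R_monom: "R (monom 1 k) 0 = R 1 (int k)"
  by (auto simp: fls_eq_iff R_nth coeff_monom)

lemma R_shift: "R P s = R (monom 1 k * P) (s - int k)"
proof -
  have "R (monom 1 k * P) (s - int k) = R (monom 1 k) 0 * R P (s - int k)"
    by (simp add: R_mult)
  also have "\<dots> = R 1 (int k) * R P (s - int k)" by (simp add: R_monom)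
  also have "\<dots> = R P s" by (simp add: R_mult)
  finally show ?thesis by simp
qed

lemma order_monom_nz: "z \<noteq> 0 \<Longrightarrow> order z (monom (1::complex) k) = 0"
  by (rule order_0I) (simp add: poly_monom)

lemma R_order_eq_aux:
  assumes "R P s = R Q t" "z \<noteq> 0" "s \<le> t"
  shows "order z P = order z Q"
proof (cases "Q = 0")
  case True
  then show ?thesis using assms(1) by (simp add: R_zero_iff)
next
  case False
  define k where "k = nat (t - s)"
  have "R Q t = R (monom 1 k * Q) s" using R_shift[of Q t k] assms(3) by (simp add: k_def)
  then have P: "P = monom 1 k * Q" using assms(1) by (auto intro: R_same_inj)
  have "monom 1 k * Q \<noteq> 0" using False by (simp add: monom_eq_0_iff)
  then show ?thesis unfolding P by (simp add: order_mult order_monom_nz assms(2))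
qed

lemma R_order_eq:
  assumes "R P s = R Q t" "z \<noteq> 0"
  shows "order z P = order z Q"
  using R_order_eq_aux[OF assms] R_order_eq_aux[OF assms(1)[symmetric] assms(2)] by linarith

lemma laurent_R_ex:
  assumes "laurent_poly f" shows "\<exists>P s. f = R P s"
proof -
  have fin: "finite {n. f $$ n \<noteq> 0}" using assms by (simp add: laurent_poly_def)
  obtain b where b: "abs ` {n. f $$ n \<noteq> 0} \<subseteq> {..b}"
    using fin finite_int_iff_bounded_le by blast
  have bd: "f $$ n \<noteq> 0 \<Longrightarrow> -b \<le> n \<and> n \<le> b" for n using b by force
  define L where "L = nat (2 * b) + 1"
  define P where "P = Poly (map (\<lambda>i. f $$ (- b + int i)) [0..<L])"
  have cP: "coeff P i = (if i < L then f $$ (- b + int i) else 0)" for i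
    by (simp add: P_def nth_default_def)
  have "f = R P (- b)"
  proof (subst fls_eq_iff, intro allI)
    fix n
    show "f $$ n = R P (- b) $$ n"
    proof (cases "f $$ n = 0")
      case True
      then show ?thesis by (auto simp: R_nth cP)
    next
      case False
      with bd[of n] show ?thesis by (auto simp: R_nth cP L_def)
    qed
  qed
  then show ?thesis by blast
qed

lemma laurent_iff: "laurent_poly f \<longleftrightarrow> (\<exists>P s. f = R P s)"
  using laurent_R laurent_R_ex by blast

lemma R_power: "R P s ^ j = R (P ^ j) (int j * s)"
  by (induction j) (simp_all add: R_one R_mult algebra_simps)

lemma R_prod: "finite I \<Longrightarrow> (\<Prod>i\<in>I. R (P i) (s i)) = R (\<Prod>i\<in>I. P i) (\<Sum>i\<in>I. s i)"
  by (induction I rule: finite_induct) (simp_all add: R_one R_mult)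

lemma order_prod:
  fixes f :: "'i \<Rightarrow> complex poly"
  shows "finite I \<Longrightarrow> (\<forall>i\<in>I. f i \<noteq> 0) \<Longrightarrow> order z (\<Prod>i\<in>I. f i) = (\<Sum>i\<in>I. order z (f i))"
proof (induction I rule: finite_induct)
  case (insert x F)
  have "prod f F \<noteq> 0" using insert by (simp add: prod_zero_iff)
  then show ?case using insert by (simp add: order_mult)
qed simp

lemma mult_le:
  assumes f: "f = R P s" and P: "P \<noteq> 0" and z: "poly (cyclotomic d) z = 0" and zne: "z \<noteq> 0"
  shows "mult d f \<le> order z P"
proof -
  define Phi where "Phi = fps_to_fls (fps_of_poly (cyclotomic d))"
  have Phi: "Phi = R (cyclotomic d) 0" by (simp add: Phi_def R_def)
  define Pr where "Pr = (\<lambda>k. \<exists>g. laurent_poly g \<and> f = Phi ^ k * g)"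
  have bound: "k \<le> order z P" if "Pr k" for k
  proof -
    obtain g where g: "laurent_poly g" "f = Phi ^ k * g" using \<open>Pr k\<close> Pr_def by blast
    obtain G u where G: "g = R G u" using g(1) laurent_R_ex by blast
    have "R P s = R (cyclotomic d ^ k * G) u"
      using g(2) f by (simp add: G Phi R_power R_mult)
    moreover have nz: "cyclotomic d ^ k * G \<noteq> 0"
      using calculation P R_zero_iff R_0 by metis
    ultimately have "order z P = order z (cyclotomic d ^ k * G)"
      using R_order_eq zne by blast
    moreover have "[:-z, 1:] ^ k dvd cyclotomic d ^ k * G"
      using z by (simp add: poly_eq_0_iff_dvd dvd_mult2 dvd_power_same)
    ultimately show ?thesis using nz order_divides by metis
  qed
  have "Pr 0" unfolding Pr_def using f laurent_R by auto
  then have "Pr (Greatest Pr)" using bound by (blast intro: GreatestI_nat)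
  then show ?thesis using bound by (simp add: mult_def Pr_def Phi_def)
qed

definition Apol :: "int \<Rightarrow> complex poly" where
  "Apol m = (if m \<ge> 0 then monom 1 (nat m) - 1 else 1 - monom 1 (nat (- m)))"
definition sApol :: "int \<Rightarrow> int" where
  "sApol m = (if m \<ge> 0 then 0 else m)"

lemma tpow_minus_one: "tpow m - 1 = R (Apol m) (sApol m)"
proof (rule fls_eqI)
  fix k
  have L: "(tpow m - 1) $$ k = (if k = m then 1 else 0) - (if k = 0 then 1 else 0)"
    by (simp add: tpow_nth)
  show "(tpow m - 1) $$ k = R (Apol m) (sApol m) $$ k"
  proof (cases "m \<ge> 0")
    case True
    have "R (Apol m) (sApol m) $$ k = (if 0 \<le> k then coeff (monom 1 (nat m) - 1 :: complex poly) (nat k) else 0)"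
      using True by (simp add: R_nth Apol_def sApol_def)
    also have "\<dots> = (if 0 \<le> k then (if nat m = nat k then 1 else 0) - (if nat k = 0 then 1 else 0) else 0)"
      by (simp add: coeff_monom)
    finally show ?thesis unfolding L using True by (cases "k \<ge> 0") auto
  next
    case False
    have "R (Apol m) (sApol m) $$ k = (if m \<le> k then coeff (1 - monom 1 (nat (-m)) :: complex poly) (nat (k - m)) else 0)"
      using False by (simp add: R_nth Apol_def sApol_def)
    also have "\<dots> = (if m \<le> k then (if nat (k - m) = 0 then 1 else 0) - (if nat (-m) = nat (k - m) then 1 else 0) else 0)"
      by (simp add: coeff_monom)
    finally show ?thesis unfolding L using False by (cases "k \<ge> m") auto
  qed
qed

lemma order_xn1:
  assumes "n > 0" "z \<noteq> 0"
  shows "order z (monom 1 n - 1 :: complex poly) = (if z ^ n = 1 then 1 else 0)"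
proof -
  have nz: "monom 1 n - 1 \<noteq> (0 :: complex poly)"
  proof
    assume "monom 1 n - 1 = (0 :: complex poly)"
    then have "coeff (monom 1 n - 1 :: complex poly) n = 0" by simp
    then show False using assms by simp
  qed
  show ?thesis
  proof (cases "z ^ n = 1")
    case True
    then have r: "poly (monom 1 n - 1) z = 0" by (simp add: poly_monom)
    have pd: "pderiv (monom 1 n - 1 :: complex poly) = monom (of_nat n) (n - 1)"
      by (simp add: pderiv_diff pderiv_monom)
    have "poly (pderiv (monom 1 n - 1 :: complex poly)) z \<noteq> 0"
      using assms by (simp add: pd poly_monom)
    then have "order z (pderiv (monom 1 n - 1 :: complex poly)) = 0" by (rule order_0I)
    then show ?thesis using order_pderiv[OF nz r] True by simp
  next
    case False
    then show ?thesis by (simp add: order_0I poly_monom)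
  qed
qed

lemma Apol_nz: "m \<noteq> 0 \<Longrightarrow> Apol m \<noteq> 0"
proof
  assume "m \<noteq> 0" "Apol m = 0"
  then have "coeff (Apol m) (nat \<bar>m\<bar>) = 0" by simp
  then show False using \<open>m \<noteq> 0\<close> by (auto simp: Apol_def split: if_splits)
qed

lemma order_Apol:
  assumes "m \<noteq> 0" "z \<noteq> 0"
  shows "order z (Apol m) = (if z ^ nat \<bar>m\<bar> = 1 then 1 else 0)"
proof (cases "m \<ge> 0")
  case True
  then show ?thesis using assms order_xn1[of "nat m" z] by (simp add: Apol_def)
next
  case False
  have "Apol m = - (monom 1 (nat (-m)) - 1)" using False by (simp add: Apol_def)
  then have "order z (Apol m) = order z (monom 1 (nat (-m)) - 1)" by (metis order_uminus)
  then show ?thesis using assms False order_xn1[of "nat (-m)" z] by simp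
qed

lemma cis_root:
  assumes "d > 0"
  shows "cis (2 * pi / real d) ^ n = 1 \<longleftrightarrow> d dvd n"
proof
  assume h: "cis (2 * pi / real d) ^ n = 1"
  then have "cis (real n * (2 * pi / real d)) = 1" by (metis Complex.DeMoivre)
  then have "cos (real n * (2 * pi / real d)) = 1"
    by (metis cis.sel(1) one_complex.sel(1))
  then obtain k :: int where k: "real n * (2 * pi / real d) = real_of_int k * 2 * pi"
    using cos_one_2pi_int by blast
  then have "real n = real_of_int k * real d" using assms by (simp add: field_simps)
  then have "int n = k * int d" by (metis of_int_eq_iff of_int_mult of_int_of_nat_eq)
  then show "d dvd n" by (metis dvd_triv_right int_dvd_int_iff)
next
  assume "d dvd n"
  then obtain c where c: "n = d * c" by blast
  have "cis (2 * pi / real d) ^ n = cis (real n * (2 * pi / real d))" by (simp add: Complex.DeMoivre)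
  also have "real n * (2 * pi / real d) = 2 * pi * real c" using assms c by (simp add: field_simps)
  finally show "cis (2 * pi / real d) ^ n = 1" by simp
qed

lemma cis_root_int:
  assumes "d > 0"
  shows "cis (2 * pi / real d) ^ nat \<bar>m\<bar> = 1 \<longleftrightarrow> int d dvd m"
proof -
  have "d dvd nat \<bar>m\<bar> \<longleftrightarrow> int d dvd int (nat \<bar>m\<bar>)" by (rule int_dvd_int_iff[symmetric])
  also have "int (nat \<bar>m\<bar>) = \<bar>m\<bar>" by simp
  finally show ?thesis using cis_root[OF assms, of "nat \<bar>m\<bar>"] by simp
qed

lemma cyclotomic_root:
  assumes "d > 1"
  shows "poly (cyclotomic d) (cis (2 * pi / real d)) = 0"
proof -
  have "1 \<in> {k. k < d \<and> coprime k d}" using assms by simp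
  moreover have "finite {k. k < d \<and> coprime k d}" by simp
  ultimately show ?thesis unfolding cyclotomic_def poly_prod
    by (intro prod_zero) (auto intro!: bexI[of _ 1])
qed

lemma qpoly_mult: "qpoly l (y::'a::comm_ring_1) * (y - 1) = y ^ l - 1"
  by (induction l) (simp_all add: qpoly_def algebra_simps)

lemma laurent_add: "laurent_poly f \<Longrightarrow> laurent_poly g \<Longrightarrow> laurent_poly (f + g)"
  unfolding laurent_poly_def
  by (rule finite_subset[of _ "{n. f $$ n \<noteq> 0} \<union> {n. g $$ n \<noteq> 0}"]) auto

lemma laurent_sum: "finite I \<Longrightarrow> (\<forall>i\<in>I. laurent_poly (f i)) \<Longrightarrow> laurent_poly (\<Sum>i\<in>I. f i)"
proof (induction I rule: finite_induct)
  case empty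
  have "(0::complex fls) = R 0 0" by simp
  then show ?case using laurent_R by (metis sum.empty)
next
  case (insert x F)
  then show ?case by (simp add: laurent_add)
qed

lemma of_nat_R: "(of_nat l :: complex fls) = R [:of_nat l:] 0"
proof (rule fls_eqI)
  fix k
  show "(of_nat l :: complex fls) $$ k = R [:of_nat l:] 0 $$ k"
    by (cases "k = 0") (auto simp: fls_of_nat_nth R_nth coeff_pCons split: nat.splits)
qed

lemma qfactor:
  assumes "l \<ge> 1" "d > 1"
  shows "\<exists>Q t. qpoly l (tpow m) = R Q t \<and> Q \<noteq> 0 \<and>
     order (cis (2 * pi / real d)) Q \<le> (if int d dvd int l * m \<and> \<not> int d dvd m then 1 else 0)"
proof -
  define z where "z = cis (2 * pi / real d)"
  have zne: "z \<noteq> 0" by (simp add: z_def)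
  have "qpoly l (tpow m) = (\<Sum>j<l. R 1 (int j * m))"
    by (simp add: qpoly_def tpow_R R_power)
  then have "laurent_poly (qpoly l (tpow m))" by (simp add: laurent_sum laurent_R)
  then obtain Q t where Qt: "qpoly l (tpow m) = R Q t" using laurent_R_ex by blast
  show ?thesis
  proof (cases "m = 0")
    case True
    have "qpoly l (tpow m) = of_nat l" using True by (simp add: qpoly_def tpow_R R_one)
    then have e: "R Q t = R [:of_nat l:] 0" using Qt of_nat_R by simp
    have nz: "[:of_nat l:] \<noteq> (0::complex poly)" using assms by simp
    have "order z [:of_nat l:] = 0" using assms by (intro order_0I) simp
    then have "order z Q = 0" using R_order_eq[OF e zne] by simp
    moreover have "Q \<noteq> 0" using e nz R_zero_iff R_0 by metis
    ultimately show ?thesis using Qt by (auto simp: z_def)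
  next
    case False
    have lm: "int l * m \<noteq> 0" using False assms by simp
    have "R (Q * Apol m) (t + sApol m) = qpoly l (tpow m) * (tpow m - 1)"
      by (simp add: Qt tpow_minus_one R_mult)
    also have "\<dots> = tpow m ^ l - 1" by (rule qpoly_mult)
    also have "tpow m ^ l = tpow (int l * m)" by (simp add: tpow_R R_power)
    finally have e: "R (Q * Apol m) (t + sApol m) = R (Apol (int l * m)) (sApol (int l * m))"
      by (simp add: tpow_minus_one)
    have nz: "Q * Apol m \<noteq> 0" using e Apol_nz[OF lm] R_zero_iff R_0 by metis
    then have Qnz: "Q \<noteq> 0" by auto
    have "order z Q + order z (Apol m) = order z (Apol (int l * m))"
      using R_order_eq[OF e zne] nz by (simp add: order_mult)
    then have "order z Q + (if int d dvd m then 1 else 0) = (if int d dvd int l * m then 1 else 0)"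
      using order_Apol[OF False zne] order_Apol[OF lm zne] cis_root_int[of d] assms(2)
      by (simp add: z_def)
    then have "order z Q \<le> (if int d dvd int l * m \<and> \<not> int d dvd m then 1 else 0)"
      by (auto split: if_splits)
    then show ?thesis using Qt Qnz by (auto simp: z_def)
  qed
qed

lemma sum_indicator_card: "finite X \<Longrightarrow> (\<Sum>v\<in>X. if P v then 1 else (0::nat)) = card {v\<in>X. P v}"
  by (simp add: sum.If_cases Int_def)

lemma weight_bound:
  assumes X: "finite X" and mv: "\<forall>v\<in>X. mv chi v \<noteq> 0" and lt: "\<forall>e\<in>E. lt e \<ge> 1"
    and d: "d > 1" and EX: "finite {e\<in>E. e \<subseteq> X}"
  shows "weight E lt chi d X \<le> card {v\<in>X. int d dvd mv chi v} +
     card {e\<in>E. e \<subseteq> X \<and> int d dvd int (lt e) * me chi e \<and> \<not> int d dvd me chi e}"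
proof -
  define z where "z = cis (2 * pi / real d)"
  have zne: "z \<noteq> 0" by (simp add: z_def)
  define S where "S = {e\<in>E. e \<subseteq> X}"
  define c where "c = (\<lambda>e. if int d dvd int (lt e) * me chi e \<and> \<not> int d dvd me chi e then 1 else (0::nat))"
  have ex: "\<forall>e\<in>S. \<exists>p. qpoly (lt e) (tpow (me chi e)) = R (fst p) (snd p) \<and> fst p \<noteq> 0 \<and> order z (fst p) \<le> c e"
    using qfactor[OF _ d] lt unfolding S_def c_def z_def by fastforce
  obtain pf where pf: "\<forall>e\<in>S. qpoly (lt e) (tpow (me chi e)) = R (fst (pf e)) (snd (pf e)) \<and>
      fst (pf e) \<noteq> 0 \<and> order z (fst (pf e)) \<le> c e"
    using bchoice[OF ex] by (elim exE) (erule that)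
  have p: "pX chi X = R (\<Prod>v\<in>X. Apol (mv chi v)) (\<Sum>v\<in>X. sApol (mv chi v))"
    unfolding pX_def by (simp add: tpow_minus_one R_prod X)
  have q: "qX E lt chi X = R (\<Prod>e\<in>S. fst (pf e)) (\<Sum>e\<in>S. snd (pf e))"
  proof -
    have "qX E lt chi X = (\<Prod>e\<in>S. R (fst (pf e)) (snd (pf e)))"
      unfolding qX_def S_def[symmetric] using pf by (intro prod.cong) auto
    then show ?thesis using EX by (simp add: R_prod S_def)
  qed
  have nzA: "(\<Prod>v\<in>X. Apol (mv chi v)) \<noteq> 0" using X mv Apol_nz by auto
  have nzQ: "(\<Prod>e\<in>S. fst (pf e)) \<noteq> 0" using EX pf by (auto simp: S_def)
  have "weight E lt chi d X \<le> order z ((\<Prod>v\<in>X. Apol (mv chi v)) * (\<Prod>e\<in>S. fst (pf e)))"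
    unfolding weight_def p q R_mult
    by (rule mult_le) (use nzA nzQ zne cyclotomic_root[OF d] in \<open>auto simp: z_def\<close>)
  also have "\<dots> = (\<Sum>v\<in>X. order z (Apol (mv chi v))) + (\<Sum>e\<in>S. order z (fst (pf e)))"
    using nzA nzQ X EX mv Apol_nz pf by (simp add: order_mult order_prod S_def)
  also have "(\<Sum>v\<in>X. order z (Apol (mv chi v))) = (\<Sum>v\<in>X. if int d dvd mv chi v then 1 else 0)"
    using mv order_Apol zne cis_root_int[of d] d by (intro sum.cong) (auto simp: z_def)
  also have "\<dots> = card {v\<in>X. int d dvd mv chi v}" using X by (rule sum_indicator_card)
  also have "(\<Sum>e\<in>S. order z (fst (pf e))) \<le> (\<Sum>e\<in>S. c e)"
    using pf by (intro sum_mono) auto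
  also have "(\<Sum>e\<in>S. c e) = card {e\<in>S. int d dvd int (lt e) * me chi e \<and> \<not> int d dvd me chi e}"
    unfolding c_def using EX S_def by (intro sum_indicator_card) simp
  also have "{e\<in>S. int d dvd int (lt e) * me chi e \<and> \<not> int d dvd me chi e} =
     {e\<in>E. e \<subseteq> X \<and> int d dvd int (lt e) * me chi e \<and> \<not> int d dvd me chi e}"
    by (auto simp: S_def)
  finally show ?thesis by simp
qed



definition tN :: "int \<Rightarrow> int \<Rightarrow> int" where
  "tN N r = (if even r then (if r + 2 < N then r + 2 else r + 1) else (if r \<ge> 3 then r - 2 else r - 1))"

definition phi :: "int \<Rightarrow> int \<Rightarrow> int" where
  "phi N r = (if even r then r div 2 else N - 1 - r div 2)"

definition rot :: "int \<Rightarrow> int \<Rightarrow> int" where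
  "rot N x = (if x + 1 = N then 0 else x + 1)"

lemma phi_ev: "phi N (2 * k) = k" by (simp add: phi_def)
lemma phi_od: "phi N (2 * k + 1) = N - 1 - k" by (simp add: phi_def)
lemma tN_ev: "tN N (2 * k) = (if 2 * k + 2 < N then 2 * k + 2 else 2 * k + 1)" by (simp add: tN_def)
lemma tN_od: "tN N (2 * k + 1) = (if k \<ge> 1 then 2 * k - 1 else 2 * k)" by (simp add: tN_def)

lemma tN_range: "even N \<Longrightarrow> 0 \<le> r \<Longrightarrow> r < N \<Longrightarrow> 0 \<le> tN N r \<and> tN N r < N"
  by (elim evenE; cases "even r") (auto elim!: evenE oddE simp: tN_ev tN_od)

lemma phi_range: "even N \<Longrightarrow> 0 \<le> r \<Longrightarrow> r < N \<Longrightarrow> 0 \<le> phi N r \<and> phi N r < N"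
  by (elim evenE; cases "even r") (auto elim!: evenE oddE simp: phi_ev phi_od)

lemma phi_inj: "even N \<Longrightarrow> 0 \<le> r \<Longrightarrow> r < N \<Longrightarrow> 0 \<le> r' \<Longrightarrow> r' < N \<Longrightarrow> phi N r = phi N r' \<Longrightarrow> r = r'"
  by (elim evenE; cases "even r"; cases "even r'") (auto elim!: evenE oddE simp: phi_ev phi_od)

lemma phi_tN: "even N \<Longrightarrow> 0 \<le> r \<Longrightarrow> r < N \<Longrightarrow> phi N (tN N r) = rot N (phi N r)"
proof (elim evenE; cases "even r")
  fix M assume N: "N = 2 * M" and "0 \<le> r" "r < N" "even r"
  then obtain k where k: "r = 2 * k" by (elim evenE)
  show ?thesis
  proof (cases "2 * k + 2 < N")
    case True
    have "tN N r = 2 * (k + 1)" using True k by (simp add: tN_ev)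
    then show ?thesis using True k N phi_ev[of N "k+1"] \<open>0 \<le> r\<close> by (simp add: phi_ev rot_def)
  next
    case False
    have "tN N r = 2 * k + 1" using False k by (simp add: tN_ev)
    then show ?thesis using False k N \<open>r < N\<close> by (simp add: phi_ev phi_od rot_def phi_def)
  qed
next
  fix M assume N: "N = 2 * M" and "0 \<le> r" "r < N" "\<not> even r"
  then obtain k where k: "r = 2 * k + 1" by (auto elim: oddE)
  show ?thesis
  proof (cases "k \<ge> 1")
    case True
    have "tN N r = 2 * (k - 1) + 1" using True k by (simp add: tN_od)
    then show ?thesis using True k N phi_od[of N "k - 1"] by (simp add: phi_od rot_def)
  next
    case False
    have "tN N r = 2 * 0" using False k \<open>0 \<le> r\<close> by (simp add: tN_od)
    then show ?thesis using False k N \<open>0 \<le> r\<close> by (simp add: phi_ev phi_od rot_def phi_def)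
  qed
qed

lemma rot_pow: "0 \<le> x \<Longrightarrow> x < N \<Longrightarrow> (rot N ^^ m) x = (x + int m) mod N"
proof (induction m)
  case 0
  then show ?case by simp
next
  case (Suc m)
  define y where "y = (x + int m) mod N"
  have y: "0 \<le> y" "y < N" using Suc.prems by (auto simp: y_def)
  have e: "x + int (Suc m) = (x + int m) + 1" by simp
  have "(x + int (Suc m)) mod N = (y + 1) mod N" unfolding e y_def by (rule mod_add_left_eq[symmetric])
  moreover have "rot N y = (y + 1) mod N" using y by (auto simp: rot_def)
  ultimately show ?case using Suc by (simp add: y_def)
qed

lemma tN_pow:
  assumes "even N" "0 \<le> r" "r < N"
  shows "phi N ((tN N ^^ m) r) = (rot N ^^ m) (phi N r) \<and> 0 \<le> (tN N ^^ m) r \<and> (tN N ^^ m) r < N"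
proof (induction m)
  case 0
  then show ?case using assms by simp
next
  case (Suc m)
  then show ?case using phi_tN[OF assms(1)] tN_range[OF assms(1)] by simp
qed

lemma tN_period:
  assumes "even N" "0 \<le> r" "r < N"
  shows "(tN N ^^ nat N) r = r"
proof -
  have pr: "0 \<le> phi N r" "phi N r < N" using phi_range[OF assms] by auto
  have "phi N ((tN N ^^ nat N) r) = (phi N r + N) mod N"
    using tN_pow[OF assms, of "nat N"] rot_pow[OF pr, of "nat N"] assms by simp
  also have "\<dots> = phi N r" using pr by simp
  finally show ?thesis using tN_pow[OF assms, of "nat N"] phi_inj[OF assms(1)] assms by blast
qed

lemma block_pow:
  assumes "even N" and hyp: "\<forall>r. 0 \<le> r \<and> r < N \<longrightarrow> f (B + r) = B + tN N r"
    and "0 \<le> r" "r < N"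
  shows "(f ^^ m) (B + r) = B + (tN N ^^ m) r"
proof (induction m)
  case (Suc m)
  then show ?case using hyp tN_pow[OF assms(1,3,4), of m] by simp
qed simp

lemma block_period:
  assumes "even N" and hyp: "\<forall>r. 0 \<le> r \<and> r < N \<longrightarrow> f (B + r) = B + tN N r"
    and "0 \<le> r" "r < N"
  shows "(f ^^ nat N) (B + r) = B + r"
  using block_pow[OF assms, of "nat N"] tN_period[OF assms(1,3,4)] by simp

definition sxf :: "int \<Rightarrow> int \<Rightarrow> int" where
  "sxf N r = (if even r then (if r \<ge> 2 then r - 1 else r) else (if r \<le> N - 3 then r + 1 else r))"

lemma block_hyp:
  assumes "even N"
    and sb: "\<forall>r. 0 \<le> r \<and> r < N \<longrightarrow> sb (B + r) = B + (if even r then r + 1 else r - 1)"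
    and sx0: "\<forall>r. 0 \<le> r \<and> r < N \<longrightarrow> sx (B + r) = B + sxf N r"
  shows "\<forall>r. 0 \<le> r \<and> r < N \<longrightarrow> (sx \<circ> sb) (B + r) = B + tN N r"
proof (intro allI impI)
  fix r assume r: "0 \<le> r \<and> r < N"
  have sx: "\<forall>r. 0 \<le> r \<and> r < N \<longrightarrow> sx (B + r) = B + (if even r then (if r \<ge> 2 then r - 1 else r) else (if r \<le> N - 3 then r + 1 else r))"
    using sx0 by (simp add: sxf_def)
  show "(sx \<circ> sb) (B + r) = B + tN N r"
  proof (cases "even r")
    case True
    have "r + 1 < N" using r True \<open>even N\<close> by presburger
    then have "(sx \<circ> sb) (B + r) = B + (if r + 1 \<le> N - 3 then r + 2 else r + 1)"
      using sb sx r True by (simp add: add.assoc)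
    moreover have "r + 2 < N \<longleftrightarrow> r + 1 \<le> N - 3" using True \<open>even N\<close> by presburger
    ultimately show ?thesis using True by (simp add: tN_def)
  next
    case False
    have "r \<ge> 1" using r False by presburger
    then have "(sx \<circ> sb) (B + r) = B + (if r - 1 \<ge> 2 then r - 2 else r - 1)"
      using sb sx r False by simp
    then show ?thesis using False by (auto simp: tN_def)
  qed
qed

definition eidx :: "int \<Rightarrow> int" where "eidx n = (if odd n then n else n - 1)"
definition isA :: "int \<Rightarrow> int \<Rightarrow> int \<Rightarrow> bool" where
  "isA I J n = (eidx n mod (2 * I + 2 * J) < 2 * I)"
definition tau :: "int \<Rightarrow> int" where "tau n = (if odd n then n + 1 else n - 1)"
definition sb :: "int \<Rightarrow> int" where "sb n = (if even n then n + 1 else n - 1)"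
definition sa :: "int \<Rightarrow> int \<Rightarrow> int \<Rightarrow> int" where "sa I J n = (if isA I J n then tau n else n)"
definition sc :: "int \<Rightarrow> int \<Rightarrow> int \<Rightarrow> int" where "sc I J n = (if isA I J n then n else tau n)"

lemma eidx_shift: "eidx (2 * c + x) = 2 * c + eidx x"
  by (simp add: eidx_def)
lemma tau_shift: "tau (2 * c + x) = 2 * c + tau x"
  by (simp add: tau_def)
lemma sb_shift: "sb (2 * c + x) = 2 * c + sb x"
  by (simp add: sb_def)

lemma Pk_eq: "(2 * I + 2 * J) * k = 2 * ((I + J) * (k::int))" by (simp add: algebra_simps)

lemma isA_shift: "isA I J ((2 * I + 2 * J) * k + x) = isA I J x"
proof -
  have "eidx ((2 * I + 2 * J) * k + x) = (2 * I + 2 * J) * k + eidx x"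
    unfolding Pk_eq by (rule eidx_shift)
  then show ?thesis by (simp add: isA_def)
qed

lemma sa_shift: "sa I J ((2 * I + 2 * J) * k + x) = (2 * I + 2 * J) * k + sa I J x"
  unfolding sa_def isA_shift unfolding Pk_eq by (simp add: tau_shift)

lemma sc_shift: "sc I J ((2 * I + 2 * J) * k + x) = (2 * I + 2 * J) * k + sc I J x"
  unfolding sc_def isA_shift unfolding Pk_eq by (simp add: tau_shift)

lemma sb_shiftP: "sb ((2 * I + 2 * J) * k + x) = (2 * I + 2 * J) * k + sb x"
  unfolding Pk_eq by (rule sb_shift)

lemma isA_small: "I \<ge> 1 \<Longrightarrow> J \<ge> 1 \<Longrightarrow> 1 \<le> x \<Longrightarrow> x \<le> 2 * I + 2 * J \<Longrightarrow> isA I J x \<longleftrightarrow> eidx x < 2 * I"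
proof -
  assume a: "I \<ge> 1" "J \<ge> 1" "1 \<le> x" "x \<le> 2 * I + 2 * J"
  have "0 \<le> eidx x" "eidx x < 2 * I + 2 * J" using a unfolding eidx_def by presburger+
  then show ?thesis unfolding isA_def by simp
qed

lemma isA_0: "I \<ge> 1 \<Longrightarrow> J \<ge> 1 \<Longrightarrow> \<not> isA I J 0"
proof -
  assume a: "I \<ge> 1" "J \<ge> 1"
  have "(-1::int) mod (2 * I + 2 * J) = 2 * I + 2 * J - 1"
    using a by (simp add: zmod_minus1)
  then show ?thesis using a by (simp add: isA_def eidx_def)
qed

lemma isA_P1: "I \<ge> 1 \<Longrightarrow> J \<ge> 1 \<Longrightarrow> isA I J (2 * I + 2 * J + 1)"
proof -
  assume a: "I \<ge> 1" "J \<ge> 1"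
  have "eidx (2 * I + 2 * J + 1) = (2 * I + 2 * J) * 1 + 1" by (simp add: eidx_def)
  then have "eidx (2 * I + 2 * J + 1) mod (2 * I + 2 * J) = 1"
    using a by simp
  then show ?thesis using a by (simp add: isA_def)
qed

lemma sa_block: "I \<ge> 1 \<Longrightarrow> J \<ge> 1 \<Longrightarrow> 0 \<le> r \<Longrightarrow> r < 2 * I + 2 \<Longrightarrow> sa I J r = sxf (2 * I + 2) r"
proof -
  assume a: "I \<ge> 1" "J \<ge> 1" "0 \<le> r" "r < 2 * I + 2"
  show ?thesis
  proof (cases "r = 0")
    case True
    then show ?thesis using isA_0[OF a(1,2)] by (simp add: sa_def sxf_def)
  next
    case False
    then have "isA I J r \<longleftrightarrow> eidx r < 2 * I" using a by (intro isA_small) auto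
    then have "sa I J r = (if (if odd r then r else r - 1) < 2 * I then (if odd r then r + 1 else r - 1) else r)"
      by (simp add: sa_def eidx_def tau_def)
    moreover have "(if (if odd r then r else r - 1) < 2 * I then (if odd r then r + 1 else r - 1) else r) = sxf (2 * I + 2) r"
      using a False unfolding sxf_def by presburger
    ultimately show ?thesis by simp
  qed
qed

lemma sa_small: "I \<ge> 1 \<Longrightarrow> J \<ge> 1 \<Longrightarrow> even r0 \<Longrightarrow> 2 * I + 2 \<le> r0 \<Longrightarrow> r0 \<le> 2 * I + 2 * J - 2 \<Longrightarrow>
   sa I J r0 = r0 \<and> sa I J (r0 + 1) = r0 + 1"
proof -
  assume a: "I \<ge> 1" "J \<ge> 1" "even r0" "2 * I + 2 \<le> r0" "r0 \<le> 2 * I + 2 * J - 2"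
  have "isA I J r0 \<longleftrightarrow> eidx r0 < 2 * I" using a by (intro isA_small) auto
  moreover have "isA I J (r0 + 1) \<longleftrightarrow> eidx (r0 + 1) < 2 * I" using a by (intro isA_small) auto
  ultimately show ?thesis using a unfolding sa_def eidx_def by (auto elim!: evenE)
qed

lemma sc_block: "I \<ge> 1 \<Longrightarrow> J \<ge> 1 \<Longrightarrow> 0 \<le> r \<Longrightarrow> r < 2 * J + 2 \<Longrightarrow> sc I J (2 * I + r) = 2 * I + sxf (2 * J + 2) r"
proof -
  assume a: "I \<ge> 1" "J \<ge> 1" "0 \<le> r" "r < 2 * J + 2"
  show ?thesis
  proof (cases "r = 2 * J + 1")
    case True
    then show ?thesis using isA_P1[OF a(1,2)] by (simp add: sc_def sxf_def add.assoc)
  next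
    case False
    then have "isA I J (2 * I + r) \<longleftrightarrow> eidx (2 * I + r) < 2 * I" using a by (intro isA_small) auto
    then have "sc I J (2 * I + r) = (if (if odd r then 2 * I + r else 2 * I + r - 1) < 2 * I then 2 * I + r else (if odd r then 2 * I + r + 1 else 2 * I + r - 1))"
      by (simp add: sc_def eidx_def tau_def)
    moreover have "(if (if odd r then 2 * I + r else 2 * I + r - 1) < 2 * I then 2 * I + r else (if odd r then 2 * I + r + 1 else 2 * I + r - 1)) = 2 * I + sxf (2 * J + 2) r"
      using a False unfolding sxf_def by presburger
    ultimately show ?thesis by simp
  qed
qed

lemma sc_small: "I \<ge> 1 \<Longrightarrow> J \<ge> 1 \<Longrightarrow> even r0 \<Longrightarrow> 2 \<le> r0 \<Longrightarrow> r0 \<le> 2 * I - 2 \<Longrightarrow>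
   sc I J r0 = r0 \<and> sc I J (r0 + 1) = r0 + 1"
proof -
  assume a: "I \<ge> 1" "J \<ge> 1" "even r0" "2 \<le> r0" "r0 \<le> 2 * I - 2"
  have "isA I J r0 \<longleftrightarrow> eidx r0 < 2 * I" using a by (intro isA_small) auto
  moreover have "isA I J (r0 + 1) \<longleftrightarrow> eidx (r0 + 1) < 2 * I" using a by (intro isA_small) auto
  ultimately show ?thesis using a unfolding sc_def eidx_def by (auto elim!: evenE)
qed

lemma fix_pow: "g x = x \<Longrightarrow> (g ^^ m) x = x"
  by (induction m) simp_all

lemma sb_form: "sb r = (if even r then r + 1 else r - 1)"
  by (simp add: sb_def)

lemma sa_sb_period:
  assumes I: "I \<ge> 1" and J: "J \<ge> 1"
  shows "((sa I J \<circ> sb) ^^ nat (2 * I + 2)) n = n"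
proof -
  define P where "P = 2 * I + 2 * J"
  define k where "k = n div P"
  define r where "r = n mod P"
  have P: "P > 0" using I J by (simp add: P_def)
  have n: "n = P * k + r" by (simp add: k_def r_def)
  have r: "0 \<le> r" "r < P" using P by (auto simp: r_def)
  show ?thesis
  proof (cases "r \<le> 2 * I + 1")
    case True
    have hyp: "\<forall>r'. 0 \<le> r' \<and> r' < 2 * I + 2 \<longrightarrow> (sa I J \<circ> sb) (P * k + r') = P * k + tN (2 * I + 2) r'"
    proof (rule block_hyp)
      show "even (2 * I + 2)" by simp
      show "\<forall>r'. 0 \<le> r' \<and> r' < 2 * I + 2 \<longrightarrow> sb (P * k + r') = P * k + (if even r' then r' + 1 else r' - 1)"
        unfolding P_def by (simp add: sb_shiftP sb_form)
      show "\<forall>r'. 0 \<le> r' \<and> r' < 2 * I + 2 \<longrightarrow> sa I J (P * k + r') = P * k + sxf (2 * I + 2) r'"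
        unfolding P_def using sa_block[OF I J] by (simp add: sa_shift)
    qed
    show ?thesis unfolding n using block_period[OF _ hyp, of r] True r by (simp add: comp_def)
  next
    case False
    define r0 where "r0 = (if even r then r else r - 1)"
    have r0: "even r0" "2 * I + 2 \<le> r0" "r0 \<le> 2 * I + 2 * J - 2"
      using False r unfolding r0_def P_def by presburger+
    have hyp: "\<forall>r'. 0 \<le> r' \<and> r' < 2 \<longrightarrow> (sa I J \<circ> sb) ((P * k + r0) + r') = (P * k + r0) + tN 2 r'"
    proof (rule block_hyp)
      show "even (2::int)" by simp
      show "\<forall>r'. 0 \<le> r' \<and> r' < 2 \<longrightarrow> sb (P * k + r0 + r') = P * k + r0 + (if even r' then r' + 1 else r' - 1)"
        unfolding P_def using r0(1) by (auto simp: sb_shiftP sb_form add.assoc)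
      show "\<forall>r'. 0 \<le> r' \<and> r' < 2 \<longrightarrow> sa I J (P * k + r0 + r') = P * k + r0 + sxf 2 r'"
      proof (intro allI impI)
        fix r' :: int assume "0 \<le> r' \<and> r' < 2"
        then have "r' = 0 \<or> r' = 1" by auto
        then show "sa I J (P * k + r0 + r') = P * k + r0 + sxf 2 r'"
          unfolding P_def using sa_small[OF I J r0] by (auto simp: sa_shift add.assoc sxf_def)
      qed
    qed
    have "n = (P * k + r0) + (r - r0)" using n by simp
    moreover have "0 \<le> r - r0" "r - r0 < 2" unfolding r0_def by auto
    ultimately have f2: "((sa I J \<circ> sb) ^^ 2) n = n"
      using block_period[OF _ hyp, of "r - r0"] by (simp add: comp_def)
    have "nat (2 * I + 2) = 2 * nat (I + 1)" using I by simp
    then have "((sa I J \<circ> sb) ^^ nat (2 * I + 2)) = (((sa I J \<circ> sb) ^^ 2) ^^ nat (I + 1))"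
      by (simp add: funpow_mult)
    then show ?thesis using fix_pow[of "_ ^^ 2" n, OF f2] by simp
  qed
qed

lemma sc_sb_period:
  assumes I: "I \<ge> 1" and J: "J \<ge> 1"
  shows "((sc I J \<circ> sb) ^^ nat (2 * J + 2)) n = n"
proof -
  define P where "P = 2 * I + 2 * J"
  define k where "k = n div P"
  define r where "r = n mod P"
  have P: "P > 0" using I J by (simp add: P_def)
  have n: "n = P * k + r" by (simp add: k_def r_def)
  have r: "0 \<le> r" "r < P" using P by (auto simp: r_def)
  have big: "((sc I J \<circ> sb) ^^ nat (2 * J + 2)) (P * k' + 2 * I + r') = P * k' + 2 * I + r'"
    if "0 \<le> r'" "r' < 2 * J + 2" for k' r'
  proof -
    have hyp: "\<forall>r'. 0 \<le> r' \<and> r' < 2 * J + 2 \<longrightarrow> (sc I J \<circ> sb) ((P * k' + 2 * I) + r') = (P * k' + 2 * I) + tN (2 * J + 2) r'"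
    proof (rule block_hyp)
      show "even (2 * J + 2)" by simp
      have "sb (2 * I + r') = 2 * I + sb r'" for r' using sb_shift[of I r'] by simp
      then show "\<forall>r'. 0 \<le> r' \<and> r' < 2 * J + 2 \<longrightarrow> sb (P * k' + 2 * I + r') = P * k' + 2 * I + (if even r' then r' + 1 else r' - 1)"
        unfolding P_def by (simp add: sb_shiftP sb_form add.assoc)
      show "\<forall>r'. 0 \<le> r' \<and> r' < 2 * J + 2 \<longrightarrow> sc I J (P * k' + 2 * I + r') = P * k' + 2 * I + sxf (2 * J + 2) r'"
        unfolding P_def using sc_block[OF I J] by (simp add: sc_shift add.assoc)
    qed
    show ?thesis using block_period[OF _ hyp, of r'] that by (simp add: comp_def)
  qed
  show ?thesis
  proof (cases "r \<ge> 2 * I")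
    case True
    have "n = P * k + 2 * I + (r - 2 * I)" using n by simp
    then show ?thesis using big[of "r - 2 * I" k] True r unfolding P_def by simp
  next
    case False
    show ?thesis
    proof (cases "r \<le> 1")
      case True
      have "n = P * (k - 1) + 2 * I + (r + 2 * J)" using n by (simp add: P_def algebra_simps)
      then show ?thesis using big[of "r + 2 * J" "k - 1"] True r J by simp
    next
      case False2: False
      define r0 where "r0 = (if even r then r else r - 1)"
      have r0: "even r0" "2 \<le> r0" "r0 \<le> 2 * I - 2"
        using False False2 r unfolding r0_def P_def by presburger+
      have hyp: "\<forall>r'. 0 \<le> r' \<and> r' < 2 \<longrightarrow> (sc I J \<circ> sb) ((P * k + r0) + r') = (P * k + r0) + tN 2 r'"
      proof (rule block_hyp)
        show "even (2::int)" by simp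
        show "\<forall>r'. 0 \<le> r' \<and> r' < 2 \<longrightarrow> sb (P * k + r0 + r') = P * k + r0 + (if even r' then r' + 1 else r' - 1)"
          unfolding P_def using r0(1) by (auto simp: sb_shiftP sb_form add.assoc)
        show "\<forall>r'. 0 \<le> r' \<and> r' < 2 \<longrightarrow> sc I J (P * k + r0 + r') = P * k + r0 + sxf 2 r'"
        proof (intro allI impI)
          fix r' :: int assume "0 \<le> r' \<and> r' < 2"
          then have "r' = 0 \<or> r' = 1" by auto
          then show "sc I J (P * k + r0 + r') = P * k + r0 + sxf 2 r'"
            unfolding P_def using sc_small[OF I J r0] by (auto simp: sc_shift add.assoc sxf_def)
        qed
      qed
      have "n = (P * k + r0) + (r - r0)" using n by simp
      moreover have "0 \<le> r - r0" "r - r0 < 2" unfolding r0_def by auto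
      ultimately have f2: "((sc I J \<circ> sb) ^^ 2) n = n"
        using block_period[OF _ hyp, of "r - r0"] by (simp add: comp_def)
      have "nat (2 * J + 2) = 2 * nat (J + 1)" using J by simp
      then have "((sc I J \<circ> sb) ^^ nat (2 * J + 2)) = (((sc I J \<circ> sb) ^^ 2) ^^ nat (J + 1))"
        by (simp add: funpow_mult)
      then show ?thesis using fix_pow[of "_ ^^ 2" n, OF f2] by simp
    qed
  qed
qed

lemma eidx_tau: "eidx (tau n) = eidx n"
  unfolding eidx_def tau_def by presburger

lemma tau_tau: "tau (tau n) = n"
  unfolding tau_def by presburger

lemma isA_tau: "isA I J (tau n) = isA I J n"
  by (simp add: isA_def eidx_tau)

lemma sa_inv: "sa I J (sa I J n) = n"
  by (simp add: sa_def isA_tau tau_tau)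

lemma sc_inv: "sc I J (sc I J n) = n"
  by (simp add: sc_def isA_tau tau_tau)

lemma sb_inv: "sb (sb n) = n"
  unfolding sb_def by presburger

lemma sa_sc: "sa I J (sc I J n) = tau n"
  by (simp add: sa_def sc_def isA_tau)

lemma sc_sa: "sc I J (sa I J n) = tau n"
  by (simp add: sa_def sc_def isA_tau)

lemma invol_pow_even: "(\<And>x. s (s x) = x) \<Longrightarrow> (s ^^ (2 * L)) x = x"
proof (induction L)
  case (Suc L)
  have "2 * Suc L = Suc (Suc (2 * L))" by simp
  then show ?case using Suc by (simp only: funpow.simps o_apply)
qed simp

lemma comm_pow: "((\<lambda>x. t (s x)) ^^ n) (t x) = t (((\<lambda>x. s (t x)) ^^ n) x)"
  by (induction n) simp_all

lemma rev_pow: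
  assumes "\<And>x. t (t x) = x" "\<And>x. ((\<lambda>x. s (t x)) ^^ n) x = x"
  shows "((\<lambda>x. t (s x)) ^^ n) x = x"
proof -
  have "((\<lambda>x. t (s x)) ^^ n) x = ((\<lambda>x. t (s x)) ^^ n) (t (t x))" using assms(1) by simp
  also have "\<dots> = t (t x)" by (simp add: comm_pow assms(2))
  finally show ?thesis using assms(1) by simp
qed

definition act :: "('v \<Rightarrow> int \<Rightarrow> int) \<Rightarrow> 'v list \<Rightarrow> int \<Rightarrow> int" where
  "act \<sigma> w = foldr (\<lambda>v f. \<sigma> v \<circ> f) w id"

lemma act_Nil [simp]: "act \<sigma> [] = id" by (simp add: act_def)
lemma act_Cons [simp]: "act \<sigma> (v # w) = \<sigma> v \<circ> act \<sigma> w" by (simp add: act_def)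
lemma act_append: "act \<sigma> (u @ w) = act \<sigma> u \<circ> act \<sigma> w"
  by (induction u) (simp_all add: o_assoc)

lemma act_rep: "act \<sigma> (concat (replicate n [v, x])) = (\<lambda>y. \<sigma> v (\<sigma> x y)) ^^ n"
  by (induction n) (simp_all add: act_append comp_def)

lemma cox_act:
  assumes "cox_eq X lt u w"
    and inv: "\<And>v y. v \<in> X \<Longrightarrow> \<sigma> v (\<sigma> v y) = y"
    and br: "\<And>v x y. v \<in> X \<Longrightarrow> x \<in> X \<Longrightarrow> v \<noteq> x \<Longrightarrow> ((\<lambda>y. \<sigma> v (\<sigma> x y)) ^^ (2 * lt {v, x})) y = y"
  shows "act \<sigma> u = act \<sigma> w"
  using assms(1)
proof (induction rule: cox_eq.induct)
  case (sq u w v)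
  show ?case using inv[OF sq(3)] by (simp add: act_append fun_eq_iff)
next
  case (braid u w v x)
  have "act \<sigma> (concat (replicate (2 * lt {v, x}) [v, x])) = id"
    using br[OF braid(3,4,5)] by (auto simp: fun_eq_iff act_rep)
  then show ?case by (simp add: act_append)
qed simp_all

lemma coxeter_infinite:
  assumes X: "u0 \<in> X" "v0 \<in> X" "w0 \<in> X" and d: "u0 \<noteq> v0" "v0 \<noteq> w0" "u0 \<noteq> w0"
    and l: "lt {u0, v0} \<ge> 2" "lt {v0, w0} \<ge> 2"
  shows "\<not> coxeter_finite lt X"
proof
  assume fin: "coxeter_finite lt X"
  define I where "I = int (lt {u0, v0}) - 1"
  define J where "J = int (lt {v0, w0}) - 1"
  have I: "I \<ge> 1" and J: "J \<ge> 1" using l by (auto simp: I_def J_def)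
  define \<sigma> where "\<sigma> = (\<lambda>y. if y = u0 then sa I J else if y = v0 then sb else if y = w0 then sc I J else id)"
  have su: "\<sigma> u0 = sa I J" and sv: "\<sigma> v0 = sb" and sw: "\<sigma> w0 = sc I J"
    using d by (auto simp: \<sigma>_def)
  have so: "\<sigma> y = id" if "y \<notin> {u0, v0, w0}" for y using that by (auto simp: \<sigma>_def)
  have inv: "\<sigma> v (\<sigma> v y) = y" for v y
    by (auto simp: \<sigma>_def sa_inv sb_inv sc_inv)
  have lsym: "lt {a, b} = lt {b, a}" for a b by (simp add: insert_commute)
  have nI: "nat (2 * I + 2) = 2 * lt {u0, v0}" using l by (simp add: I_def)
  have nJ: "nat (2 * J + 2) = 2 * lt {v0, w0}" using l by (simp add: J_def)
  have P1: "((\<lambda>y. sa I J (sb y)) ^^ (2 * lt {u0, v0})) y = y" for y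
    using sa_sb_period[OF I J, of y] by (simp add: nI comp_def)
  have P2: "((\<lambda>y. sc I J (sb y)) ^^ (2 * lt {v0, w0})) y = y" for y
    using sc_sb_period[OF I J, of y] by (simp add: nJ comp_def)
  have P1': "((\<lambda>y. sb (sa I J y)) ^^ (2 * lt {u0, v0})) y = y" for y
    by (rule rev_pow[OF sb_inv P1])
  have P2': "((\<lambda>y. sb (sc I J y)) ^^ (2 * lt {v0, w0})) y = y" for y
    by (rule rev_pow[OF sb_inv P2])
  have tau_eq: "(\<lambda>y. sa I J (sc I J y)) = tau" "(\<lambda>y. sc I J (sa I J y)) = tau"
    by (auto simp: fun_eq_iff sa_sc sc_sa)
  have P3: "(tau ^^ (2 * L)) y = y" for L y by (rule invol_pow_even) (rule tau_tau)
  have br: "((\<lambda>y. \<sigma> v (\<sigma> x y)) ^^ (2 * lt {v, x})) y = y" if "v \<noteq> x" for v x y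
  proof (cases "v \<in> {u0, v0, w0} \<and> x \<in> {u0, v0, w0}")
    case True
    then show ?thesis using that d P1 P2 P1' P2' P3 tau_eq su sv sw lsym
      by (auto simp: insert_commute)
  next
    case False
    then have "v \<notin> {u0, v0, w0} \<or> x \<notin> {u0, v0, w0}" by blast
    then show ?thesis
    proof
      assume v: "v \<notin> {u0, v0, w0}"
      have "(\<lambda>y. \<sigma> v (\<sigma> x y)) = \<sigma> x" using so[OF v] by auto
      then show ?thesis using invol_pow_even[of "\<sigma> x"] inv by simp
    next
      assume x: "x \<notin> {u0, v0, w0}"
      have "(\<lambda>y. \<sigma> v (\<sigma> x y)) = \<sigma> v" using so[OF x] by auto
      then show ?thesis using invol_pow_even[of "\<sigma> v"] inv by simp
    qed
  qed
  have reach: "\<exists>w. set w \<subseteq> X \<and> act \<sigma> w 0 = int k" for k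
  proof (induction k)
    case 0
    then show ?case by (intro exI[of _ "[]"]) simp
  next
    case (Suc k)
    then obtain w where w: "set w \<subseteq> X" "act \<sigma> w 0 = int k" by blast
    show ?case
    proof (cases "even (int k)")
      case True
      then show ?thesis using w X by (intro exI[of _ "v0 # w"]) (simp add: sv sb_def)
    next
      case False
      show ?thesis
      proof (cases "isA I J (int k)")
        case True
        then show ?thesis using w X False by (intro exI[of _ "u0 # w"]) (simp add: su sa_def tau_def)
      next
        case False2: False
        then show ?thesis using w X False by (intro exI[of _ "w0 # w"]) (simp add: sw sc_def tau_def)
      qed
    qed
  qed
  define S where "S = {c. \<exists>u. set u \<subseteq> X \<and> c = {w. cox_eq X lt u w}}"
  have finS: "finite S" using fin by (simp add: coxeter_finite_def S_def)
  define g where "g = (\<lambda>c. act \<sigma> (SOME w. w \<in> c) 0)"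
  have "range int \<subseteq> g ` S"
  proof
    fix z :: int assume "z \<in> range int"
    then obtain k where k: "z = int k" by blast
    obtain u where u: "set u \<subseteq> X" "act \<sigma> u 0 = int k" using reach by blast
    define c where "c = {w. cox_eq X lt u w}"
    have cS: "c \<in> S" using u by (auto simp: S_def c_def)
    have "u \<in> c" using u by (simp add: c_def cox_eq.refl)
    then have "(SOME w. w \<in> c) \<in> c" by (rule someI)
    then have "cox_eq X lt u (SOME w. w \<in> c)" by (simp add: c_def)
    then have "act \<sigma> u = act \<sigma> (SOME w. w \<in> c)"
      by (rule cox_act) (auto intro: inv br)
    then have "g c = z" using u k by (simp add: g_def)
    then show "z \<in> g ` S" using cS by blast
  qed
  moreover have "finite (g ` S)" using finS by simp
  ultimately have "finite (range int :: int set)" by (rule finite_subset)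
  moreover have "infinite (range int :: int set)"
    using finite_imageD[of int "UNIV :: nat set"] inj_of_nat by auto
  ultimately show False by simp
qed



lemma sigma_inj: "sigma X = (sigma Y :: 'v set \<Rightarrow> 'k::field) \<Longrightarrow> X = Y"
  by (metis sigma_def one_neq_zero)

lemma kspan_mono: "A \<subseteq> B \<Longrightarrow> kspan A \<subseteq> kspan B"
  unfolding kspan_def by blast

lemma kspan_empty: "kspan {} = {\<lambda>Y. 0}"
  unfolding kspan_def by auto

lemma kspan_gen: "b \<in> B \<Longrightarrow> b \<in> kspan B"
  unfolding kspan_def
  by (rule CollectI, rule exI[of _ "{b}"], rule exI[of _ "\<lambda>_. 1"]) auto

lemma qb_general:
  fixes T :: "'v set set" and w :: "'v set \<Rightarrow> nat" and n :: int
  defines "G \<equiv> (\<lambda>p. {sigma X | X. X \<in> T \<and> int (card X) = n + 1 \<and> int (w X) \<le> p})"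
  defines "F \<equiv> (\<lambda>p. if p < 0 then {\<lambda>Y. 0::'k::field} else kspan (G p))"
  shows "quotient_basis (F p) (F (p - 1)) {sigma X | X. X \<in> T \<and> int (card X) = n + 1 \<and> int (w X) = p}"
proof (cases "p < 0")
  case True
  have "{sigma X | X. X \<in> T \<and> int (card X) = n + 1 \<and> int (w X) = p} = ({} :: ('v set \<Rightarrow> 'k) set)"
    using True by auto
  then show ?thesis using True unfolding quotient_basis_def F_def by auto
next
  case False
  define B :: "('v set \<Rightarrow> 'k) set" where "B = {sigma X | X. X \<in> T \<and> int (card X) = n + 1 \<and> int (w X) = p}"
  have FW: "F (p - 1) = kspan (G (p - 1))"
  proof (cases "p = 0")
    case True
    have "G (p - 1) = {}" using True by (auto simp: G_def)
    then show ?thesis using True by (simp add: F_def kspan_empty)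
  qed (use False in \<open>simp add: F_def\<close>)
  have FU: "F p = kspan (G p)" using False by (simp add: F_def)
  have BG: "B \<subseteq> G p" by (auto simp: B_def G_def)
  have GG: "G (p - 1) \<subseteq> G p" by (auto simp: G_def)
  have span: "\<exists>A a. finite A \<and> A \<subseteq> B \<and> (\<lambda>Y. u Y - (\<Sum>b\<in>A. a b * b Y)) \<in> kspan (G (p - 1))"
    if uin: "u \<in> kspan (G p)" for u
  proof -
    obtain A a where A: "finite A" "A \<subseteq> G p" and u: "u = (\<lambda>Y. \<Sum>b\<in>A. a b * b Y)"
      using uin unfolding kspan_def by blast
    have A2: "A - B \<subseteq> G (p - 1)"
    proof
      fix b assume b: "b \<in> A - B"
      then obtain X where X: "b = sigma X" "X \<in> T" "int (card X) = n + 1" "int (w X) \<le> p"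
        using A(2) by (auto simp: G_def)
      have "int (w X) \<noteq> p" using b X by (auto simp: B_def)
      then show "b \<in> G (p - 1)" using X by (auto simp: G_def)
    qed
    have "(\<lambda>Y. u Y - (\<Sum>b\<in>A \<inter> B. a b * b Y)) = (\<lambda>Y. \<Sum>b\<in>A - B. a b * b Y)"
    proof
      fix Y
      have "(\<Sum>b\<in>A. a b * b Y) = (\<Sum>b\<in>A \<inter> B. a b * b Y) + (\<Sum>b\<in>A - B. a b * b Y)"
        using A(1) by (rule sum.Int_Diff)
      then show "u Y - (\<Sum>b\<in>A \<inter> B. a b * b Y) = (\<Sum>b\<in>A - B. a b * b Y)" by (simp add: u)
    qed
    moreover have "(\<lambda>Y. \<Sum>b\<in>A - B. a b * b Y) \<in> kspan (G (p - 1))"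
      unfolding kspan_def using A(1) A2 by blast
    ultimately show ?thesis using A(1) by (intro exI[of _ "A \<inter> B"] exI[of _ a]) auto
  qed
  have indep: "\<forall>b\<in>A. a b = 0"
    if A: "finite A" "A \<subseteq> B" and f: "(\<lambda>Y. \<Sum>b\<in>A. a b * b Y) \<in> kspan (G (p - 1))" for A a
  proof
    fix b assume b: "b \<in> A"
    then obtain X0 where X0: "b = sigma X0" "X0 \<in> T" "int (w X0) = p" using A(2) by (auto simp: B_def)
    obtain A' a' where A': "finite A'" "A' \<subseteq> G (p - 1)" and e: "(\<lambda>Y. \<Sum>b\<in>A. a b * b Y) = (\<lambda>Y. \<Sum>c\<in>A'. a' c * c Y)"
      using f unfolding kspan_def by blast
    have "(\<Sum>c\<in>A'. a' c * c X0) = 0"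
    proof (rule sum.neutral, rule ballI)
      fix c assume "c \<in> A'"
      then obtain X where X: "c = sigma X" "int (w X) \<le> p - 1" using A'(2) by (auto simp: G_def)
      then have "X \<noteq> X0" using X0 by auto
      then show "a' c * c X0 = 0" using X by (simp add: sigma_def)
    qed
    moreover have "(\<Sum>b'\<in>A. a b' * b' X0) = (\<Sum>b'\<in>A. if b' = b then a b else 0)"
    proof (rule sum.cong[OF HOL.refl])
      fix b' assume "b' \<in> A"
      then obtain X where X: "b' = sigma X" using A(2) by (auto simp: B_def)
      have "b' = b \<longleftrightarrow> X = X0" using X X0 sigma_inj by metis
      then show "a b' * b' X0 = (if b' = b then a b else 0)" using X X0 by (auto simp: sigma_def)
    qed
    moreover have "(\<Sum>b'\<in>A. if b' = b then a b else 0) = a b" using A(1) b by simp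
    ultimately show "a b = 0" using fun_cong[OF e, of X0] by simp
  qed
  show ?thesis
    unfolding quotient_basis_def FU FW B_def[symmetric]
  proof (intro conjI)
    show "B \<subseteq> kspan (G p)" using BG kspan_gen by blast
    show "kspan (G (p - 1)) \<subseteq> kspan (G p)" using GG by (rule kspan_mono)
    show "\<forall>u\<in>kspan (G p). \<exists>A a. finite A \<and> A \<subseteq> B \<and> (\<lambda>Y. u Y - (\<Sum>b\<in>A. a b * b Y)) \<in> kspan (G (p - 1))"
      using span by blast
    show "\<forall>A a. finite A \<and> A \<subseteq> B \<and> (\<lambda>Y. \<Sum>b\<in>A. a b * b Y) \<in> kspan (G (p - 1)) \<longrightarrow> (\<forall>b\<in>A. a b = 0)"
      using indep by blast
  qed
qed



lemma me_pair: "a \<noteq> b \<Longrightarrow> me chi {a, b} = mv chi a + mv chi b"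
  by (simp add: me_def)

lemma weight_le_card:
  assumes X: "X \<in> simplices V E lt" and lg: "labeled_graph V E lt" and nr: "non_resonant V chi"
    and d: "d > 1"
  shows "weight E lt chi d X \<le> card X"
proof -
  have cl: "clique V E X" and cf: "coxeter_finite lt X" using X by (auto simp: simplices_def)
  have XV: "X \<subseteq> V" using cl by (simp add: clique_def)
  have finV: "finite V" using lg by (simp add: labeled_graph_def)
  have finX: "finite X" using XV finV by (rule finite_subset)
  have edges: "\<forall>e\<in>E. \<exists>v w. v \<noteq> w \<and> v \<in> V \<and> w \<in> V \<and> e = {v, w}" and lt1: "\<forall>e\<in>E. lt e \<ge> 1"
    using lg by (auto simp: labeled_graph_def)
  have mvnz: "\<forall>v\<in>X. mv chi v \<noteq> 0" using nr XV by (auto simp: non_resonant_def)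
  have finEX: "finite {e\<in>E. e \<subseteq> X}"
    by (rule finite_subset[of _ "Pow X"]) (use finX in auto)
  define Aset where "Aset = {v\<in>X. int d dvd mv chi v}"
  define Nset where "Nset = {v\<in>X. \<not> int d dvd mv chi v}"
  define C where "C = {e\<in>E. e \<subseteq> X \<and> int d dvd int (lt e) * me chi e \<and> \<not> int d dvd me chi e}"
  have wb: "weight E lt chi d X \<le> card Aset + card C"
    unfolding Aset_def C_def by (rule weight_bound[OF finX mvnz lt1 d finEX])
  define f where "f = (\<lambda>e. SOME v. v \<in> e \<and> \<not> int d dvd mv chi v)"
  have fC: "f e \<in> e \<and> \<not> int d dvd mv chi (f e)" if eC: "e \<in> C" for e
  proof -
    obtain a b where ab: "a \<noteq> b" "e = {a, b}" using edges eC by (auto simp: C_def)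
    have "\<not> int d dvd me chi e" using eC by (simp add: C_def)
    then have "\<not> int d dvd mv chi a \<or> \<not> int d dvd mv chi b" using ab by (auto simp: me_pair)
    then have "\<exists>v. v \<in> e \<and> \<not> int d dvd mv chi v" using ab by auto
    then show ?thesis unfolding f_def by (rule someI_ex)
  qed
  have lt2: "lt e \<ge> 2" if "e \<in> C" for e
  proof -
    have "lt e \<ge> 1" using lt1 that by (auto simp: C_def)
    moreover have "lt e \<noteq> 1" using that by (auto simp: C_def)
    ultimately show ?thesis by simp
  qed
  have edge2: "\<exists>y. y \<noteq> x \<and> e = {x, y}" if eC: "e \<in> C" and xe: "x \<in> e" for e x
  proof -
    obtain a b where ab: "a \<noteq> b" "e = {a, b}" using edges eC by (auto simp: C_def)
    then show ?thesis using xe by (auto simp: insert_commute)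
  qed
  have inj: "inj_on f C"
  proof (rule inj_onI, rule ccontr)
    fix e1 e2 assume e: "e1 \<in> C" "e2 \<in> C" "f e1 = f e2" "e1 \<noteq> e2"
    define x where "x = f e1"
    have x1: "x \<in> e1" and x2: "x \<in> e2" using fC[OF e(1)] fC[OF e(2)] e(3) by (simp_all add: x_def)
    obtain y1 where y1: "y1 \<noteq> x" "e1 = {x, y1}" using edge2[OF e(1) x1] by blast
    obtain y2 where y2: "y2 \<noteq> x" "e2 = {x, y2}" using edge2[OF e(2) x2] by blast
    have "y1 \<noteq> y2" using y1 y2 e(4) by auto
    moreover have "y1 \<in> X" "x \<in> X" "y2 \<in> X" using e y1 y2 by (auto simp: C_def)
    moreover have "lt {y1, x} \<ge> 2" using lt2[OF e(1)] y1 by (simp add: insert_commute)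
    moreover have "lt {x, y2} \<ge> 2" using lt2[OF e(2)] y2 by simp
    ultimately have "\<not> coxeter_finite lt X" using coxeter_infinite[of y1 X x y2 lt] y1 y2 by auto
    then show False using cf by simp
  qed
  have "f ` C \<subseteq> Nset" using fC by (auto simp: Nset_def C_def)
  then have "card C \<le> card Nset"
    using card_inj_on_le[OF inj] finX by (auto simp: Nset_def)
  moreover have "card Aset + card Nset = card X"
  proof -
    have "Aset \<union> Nset = X" "Aset \<inter> Nset = {}" by (auto simp: Aset_def Nset_def)
    then show ?thesis using card_Un_disjoint[of Aset Nset] finX
      by (metis finite_Un)
  qed
  ultimately show ?thesis using wb by linarith
qed

lemma empty_simplex: "{} \<in> simplices V E lt"
proof -
  have "{c. \<exists>u. set u \<subseteq> {} \<and> c = {w. cox_eq {} lt u w}} \<subseteq> {{w. cox_eq {} lt [] w}}" by auto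
  then have "coxeter_finite lt {}" unfolding coxeter_finite_def by (rule finite_subset) simp
  then show ?thesis by (simp add: simplices_def clique_def)
qed

theorem proposition5p4:
  fixes K :: "'k::field_char_0 itself"
    and V :: "'v set" and E :: "'v set set" and lt :: "'v set \<Rightarrow> nat"
    and chi :: "('v \<times> bool) list \<Rightarrow> int" and d :: nat
  assumes "labeled_graph V E lt"
    and "graph_connected V E"
    and "FC_type V E lt"
    and "artin_hom V E lt chi"
    and "hom_surjective V chi"
    and "non_resonant V chi"
    and "d \<in> T_Gamma V E lt chi"
  shows "finite {(p, q). \<not> E0_basis K V E lt chi d p q {}} \<and>
         (\<forall>p q. p + q < -1 \<longrightarrow> E0_basis K V E lt chi d p q {}) \<and>
         (\<forall>p. E0_basis K V E lt chi d p (- p - 1) (if p = 0 then {sigma {}} else {})) \<and>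
         (\<forall>p q. q \<ge> 0 \<longrightarrow>
           E0_basis K V E lt chi d p (q - p)
             (if p \<le> q + 1
              then {sigma X | X. X \<in> simplices V E lt \<and> int (card X) = q + 1 \<and>
                                 int (weight E lt chi d X) = p}
              else {}))"
proof -
  have lg: "labeled_graph V E lt" and nr: "non_resonant V chi" using assms by auto
  have d: "d > 1" using assms(7) by (auto simp: T_Gamma_def)
  define T where "T = simplices V E lt"
  define w where "w = weight E lt chi d"
  define Bs :: "int \<Rightarrow> int \<Rightarrow> ('v set \<Rightarrow> 'k) set"
    where "Bs = (\<lambda>p n. {sigma X | X. X \<in> T \<and> int (card X) = n + 1 \<and> int (w X) = p})"
  have finV: "finite V" using lg by (simp add: labeled_graph_def)
  have TV: "T \<subseteq> Pow V" by (auto simp: T_def simplices_def clique_def)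
  have finT: "finite T" using finV TV finite_subset by blast
  have finX: "finite X" if "X \<in> T" for X using that TV finV finite_subset by blast
  have wle: "w X \<le> card X" if "X \<in> T" for X
    using weight_le_card[OF _ lg nr d] that by (simp add: T_def w_def)
  have key: "E0_basis K V E lt chi d p q (Bs p (p + q))" for p q
    unfolding E0_basis_def Filt_def Bs_def T_def w_def
    using qb_general[where T="simplices V E lt" and n="p + q" and w="weight E lt chi d" and p=p and 'k='k] by simp
  have part1: "finite {(p, q). \<not> E0_basis K V E lt chi d p q {}}"
  proof (rule finite_subset)
    show "{(p, q). \<not> E0_basis K V E lt chi d p q {}} \<subseteq>
          (\<lambda>X. (int (w X), int (card X) - 1 - int (w X))) ` T"
    proof
      fix pq assume "pq \<in> {(p, q). \<not> E0_basis K V E lt chi d p q {}}"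
      then obtain p q where pq: "pq = (p, q)" "\<not> E0_basis K V E lt chi d p q {}" by blast
      have "Bs p (p + q) \<noteq> {}" using key[of p q] pq(2) by force
      then obtain X where X: "X \<in> T" "int (card X) = p + q + 1" "int (w X) = p"
        by (auto simp: Bs_def)
      then show "pq \<in> (\<lambda>X. (int (w X), int (card X) - 1 - int (w X))) ` T"
        using pq(1) by (intro image_eqI[of _ _ X]) auto
    qed
    show "finite ((\<lambda>X. (int (w X), int (card X) - 1 - int (w X))) ` T)" using finT by simp
  qed
  have part2: "E0_basis K V E lt chi d p q {}" if "p + q < -1" for p q
  proof -
    have "Bs p (p + q) = {}" using that by (auto simp: Bs_def)
    then show ?thesis using key[of p q] by simp
  qed
  have part3: "E0_basis K V E lt chi d p (- p - 1) (if p = 0 then {sigma {}} else {})" for p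
  proof -
    have "Bs p (p + (- p - 1)) = (if p = 0 then {sigma {}} else {})"
    proof -
      have e: "X \<in> T \<and> card X = 0 \<longleftrightarrow> X = {}" for X
      proof
        assume a: "X \<in> T \<and> card X = 0"
        then have "finite X" using finX by blast
        then show "X = {}" using a by simp
      next
        assume "X = {}"
        then show "X \<in> T \<and> card X = 0" using empty_simplex[of V E lt] by (simp add: T_def)
      qed
      have w0: "w {} = 0" using wle[of "{}"] empty_simplex[of V E lt] by (simp add: T_def)
      show ?thesis
      proof (rule set_eqI)
        fix s :: "'v set \<Rightarrow> 'k"
        have "s \<in> Bs p (p + (- p - 1)) \<longleftrightarrow> (\<exists>X. s = sigma X \<and> X \<in> T \<and> card X = 0 \<and> int (w X) = p)"
          by (simp add: Bs_def)
        also have "\<dots> \<longleftrightarrow> (s = sigma {} \<and> int (w {}) = p)"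
        proof
          assume "\<exists>X. s = sigma X \<and> X \<in> T \<and> card X = 0 \<and> int (w X) = p"
          then obtain X where X: "s = sigma X" "X \<in> T" "card X = 0" "int (w X) = p" by blast
          then have "X = {}" using e[of X] by blast
          then show "s = sigma {} \<and> int (w {}) = p" using X by simp
        next
          assume h: "s = sigma {} \<and> int (w {}) = p"
          have "{} \<in> T \<and> card {} = 0" using e[of "{}"] by simp
          then show "\<exists>X. s = sigma X \<and> X \<in> T \<and> card X = 0 \<and> int (w X) = p" using h by blast
        qed
        also have "\<dots> \<longleftrightarrow> s \<in> (if p = 0 then {sigma {}} else {})" using w0 by auto
        finally show "s \<in> Bs p (p + (- p - 1)) \<longleftrightarrow> s \<in> (if p = 0 then {sigma {}} else {})" .
      qed
    qed
    then show ?thesis using key[of p "- p - 1"] by simp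
  qed
  have part4: "E0_basis K V E lt chi d p (q - p)
             (if p \<le> q + 1
              then {sigma X | X. X \<in> simplices V E lt \<and> int (card X) = q + 1 \<and>
                                 int (weight E lt chi d X) = p}
              else {})" if "q \<ge> 0" for p q
  proof -
    have "Bs p (p + (q - p)) = (if p \<le> q + 1
              then {sigma X | X. X \<in> simplices V E lt \<and> int (card X) = q + 1 \<and>
                                 int (weight E lt chi d X) = p}
              else {})"
    proof (cases "p \<le> q + 1")
      case True
      then show ?thesis by (simp add: Bs_def T_def w_def)
    next
      case False
      have "\<not> (X \<in> T \<and> int (card X) = q + 1 \<and> int (w X) = p)" for X
        using wle[of X] False by auto
      then show ?thesis using False by (auto simp: Bs_def)
    qed
    then show ?thesis using key[of p "q - p"] by simp
  qed
  show ?thesis using part1 part2 part3 part4 by blast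
qed

end
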